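(* For every finite simple graph $G$ there exists a (not necessarily connected) supergraceful graph $H$ containing a subgraph isomorphic to $G$.
   Context: For a graph $H$ with $p$ nodes and $q$ edges, a total labeling is a map $\varphi: V(H) \to \{1,\dots,p+q\}$ such that the $p$ node labels $\varphi(x)$ and the $q$ edge labels $|\varphi(x)-\varphi(y)|$, $xy \in E(H)$, are all pairwise distinct, together forming exactly $\{1,\dots,p+q\}$; $H$ is supergraceful if it admits a total labeling. *)

theory Defs
  imports Main
begin

definition simple_graph :: "'a set \<Rightarrow> 'a set set \<Rightarrow> bool" where
  "simple_graph V E \<longleftrightarrow> finite V \<and> (\<forall>e\<in>E. e \<subseteq> V \<and> card e = 2)"

text \<open>Label of a node (Inl v) is phi v; label of an edge (Inr {x,y}) is |phi x - phi y|,
  written as Max - Min of the image of the edge.\<close>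
definition total_label :: "('a \<Rightarrow> int) \<Rightarrow> 'a + 'a set \<Rightarrow> int" where
  "total_label \<phi> z = (case z of Inl v \<Rightarrow> \<phi> v | Inr e \<Rightarrow> Max (\<phi> ` e) - Min (\<phi> ` e))"

definition total_labeling :: "'a set \<Rightarrow> 'a set set \<Rightarrow> ('a \<Rightarrow> int) \<Rightarrow> bool" where
  "total_labeling V E \<phi> \<longleftrightarrow>
     bij_betw (total_label \<phi>) (Inl ` V \<union> Inr ` E) {1 .. int (card V + card E)}"

definition supergraceful :: "'a set \<Rightarrow> 'a set set \<Rightarrow> bool" where
  "supergraceful V E \<longleftrightarrow> (\<exists>\<phi>. total_labeling V E \<phi>)"

definition contains_copy :: "'b set \<Rightarrow> 'b set set \<Rightarrow> 'a set \<Rightarrow> 'a set set \<Rightarrow> bool" where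
  "contains_copy VH EH VG EG \<longleftrightarrow>
     (\<exists>f. inj_on f VG \<and> f ` VG \<subseteq> VH \<and> (\<forall>e\<in>EG. f ` e \<in> EH))"

end

theory Submission
  imports Defs
begin

lemma band_le: fixes i j :: nat assumes "i < j"
  shows "3^(j-1) < (3::nat)^j - 3^i \<and> (3::nat)^j - 3^i < 3^j \<and> 1 \<le> (3::nat)^j - 3^i"
proof -
  have a: "(3::nat)^i \<le> 3^(j-1)" using assms by (intro power_increasing) auto
  have b: "(3::nat)^j = 3 * 3^(j-1)" using assms by (metis Suc_diff_1 gr_implies_not0 neq0_conv power_Suc)
  have c: "(0::nat) < 3^i" by simp
  show ?thesis using a b c by linarith
qed

lemma band_unique: fixes x j l :: nat
  assumes "3^(j-1) < x" "x < 3^j" "3^(l-1) < x" "x < 3^l" shows "j = l"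
proof (rule ccontr)
  assume "j \<noteq> l"
  then consider "j < l" | "l < j" by linarith
  then show False
  proof cases
    case 1
    then have "(3::nat)^j \<le> 3^(l-1)" by (intro power_increasing) auto
    then show False using assms by linarith
  next
    case 2
    then have "(3::nat)^l \<le> 3^(j-1)" by (intro power_increasing) auto
    then show False using assms by linarith
  qed
qed

lemma band_notpow: fixes x j m :: nat
  assumes "3^(j-1) < (3::nat)^m" "(3::nat)^m < 3^j" shows False
proof -
  have "j - 1 < m" using assms(1) power_strict_increasing_iff[of 3 "j-1" m] by simp
  moreover have "m < j" using assms(2) power_strict_increasing_iff[of 3 m j] by simp
  ultimately show False by linarith
qed

lemma mono_int_nat: "mono (int)" by (simp add: mono_def)

lemma generic:
  fixes S :: "nat set" and EH :: "nat set set" and M :: nat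
  defines "d \<equiv> (\<lambda>e::nat set. Max e - Min e)"
  assumes edges: "\<forall>e\<in>EH. e \<subseteq> S \<and> card e = 2"
    and SM: "S \<subseteq> {1..M}"
    and inj: "inj_on d EH"
    and DM: "d ` EH \<subseteq> {1..M} - S"
  shows "simple_graph ({1..M} - d ` EH) EH \<and> supergraceful ({1..M} - d ` EH) EH"
proof -
  define VH where "VH = {1..M} - d ` EH"
  have fin: "finite VH" unfolding VH_def by simp
  have finE: "finite EH"
  proof -
    have "EH \<subseteq> Pow {1..M}" using edges SM by auto
    then show ?thesis by (meson finite_Pow_iff finite_atLeastAtMost finite_subset)
  qed
  have sg: "simple_graph VH EH" unfolding simple_graph_def using fin edges SM DM VH_def by blast
  have TL: "total_label int (Inr e) = int (d e)" if "e \<in> EH" for e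
  proof -
    have c2: "card e = 2" using edges that by auto
    then obtain x y where "e = {x, y}" by (auto simp: card_2_iff)
    then have ne: "finite e" "e \<noteq> {}" by auto
    have "Max (int ` e) = int (Max e)" using mono_Max_commute[OF mono_int_nat ne] by simp
    moreover have "Min (int ` e) = int (Min e)" using mono_Min_commute[OF mono_int_nat ne] by simp
    moreover have "Min e \<le> Max e" using ne by simp
    ultimately show ?thesis by (simp add: total_label_def d_def)
  qed
  define A where "A = Inl ` VH \<union> Inr ` EH"
  have injT: "inj_on (total_label int) A"
  proof (rule inj_onI)
    fix a b assume a: "a \<in> A" and b: "b \<in> A" and eq: "total_label int a = total_label int b"
    show "a = b"
    proof (cases a)
      case (Inl x)
      then have x: "x \<in> VH" using a A_def by auto
      show ?thesis
      proof (cases b)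
        case (Inl y) then show ?thesis using eq \<open>a = Inl x\<close> by (simp add: total_label_def)
      next
        case (Inr e) then have e: "e \<in> EH" using b A_def by auto
        have "int x = int (d e)" using eq TL[OF e] \<open>a = Inl x\<close> Inr by (simp add: total_label_def)
        then have "x = d e" by simp
        then show ?thesis using x e VH_def by auto
      qed
    next
      case (Inr e1)
      then have e1: "e1 \<in> EH" using a A_def by auto
      show ?thesis
      proof (cases b)
        case (Inl y)
        then have y: "y \<in> VH" using b A_def by auto
        have "int y = int (d e1)" using eq TL[OF e1] Inl Inr by (simp add: total_label_def)
        then have "y = d e1" by simp
        then show ?thesis using y e1 VH_def by auto
      next
        case (Inr e2) then have e2: "e2 \<in> EH" using b A_def by auto
        have "d e1 = d e2" using eq TL[OF e1] TL[OF e2] Inr \<open>a = Inr e1\<close> by simp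
        then show ?thesis using inj e1 e2 Inr \<open>a = Inr e1\<close> by (simp add: inj_on_def)
      qed
    qed
  qed
  have img: "total_label int ` A = int ` {1..M}"
  proof -
    have "total_label int ` A = int ` VH \<union> int ` (d ` EH)"
      unfolding A_def image_Un image_image using TL by (auto simp: total_label_def)
    also have "\<dots> = int ` (VH \<union> d ` EH)" by auto
    also have "VH \<union> d ` EH = {1..M}" using VH_def DM by auto
    finally show ?thesis .
  qed
  have cardA: "card A = card VH + card EH"
  proof -
    have "card A = card (Inl ` VH :: (nat + nat set) set) + card (Inr ` EH :: (nat + nat set) set)"
      unfolding A_def by (rule card_Un_disjoint) (use fin finE in auto)
    also have "\<dots> = card VH + card EH" by (simp add: card_image)
    finally show ?thesis .
  qed
  have "card A = card (int ` {1..M})" using card_image[OF injT] img by simp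
  also have "\<dots> = M" by (simp add: card_image)
  finally have Mc: "M = card VH + card EH" using cardA by simp
  have "int ` {1..M} = {1..int M}"
    by (simp add: image_int_atLeastAtMost)
  then have "bij_betw (total_label int) A {1..int (card VH + card EH)}"
    using injT img Mc unfolding bij_betw_def by simp
  then have "supergraceful VH EH" unfolding supergraceful_def total_labeling_def A_def by blast
  then show ?thesis using sg VH_def by simp
qed

theorem theorem8p7:
  fixes V :: "'a set" and E :: "'a set set"
  assumes "simple_graph V E"
  shows "\<exists>(VH :: nat set) (EH :: nat set set).
           simple_graph VH EH \<and> supergraceful VH EH \<and> contains_copy VH EH V E"
proof -
  have finV: "finite V" and EV: "\<forall>e\<in>E. e \<subseteq> V \<and> card e = 2"
    using assms unfolding simple_graph_def by auto
  obtain g n where gimg: "g ` V = {i. i < (n::nat)}" and ginj: "inj_on g V"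
    using finite_imp_inj_to_nat_seg[OF finV] by blast
  define f where "f v = (3::nat) ^ g v" for v
  have finj: "inj_on f V" using ginj unfolding f_def inj_on_def by simp
  define S where "S = f ` V"
  define EH where "EH = (\<lambda>e. f ` e) ` E"
  define M where "M = (3::nat) ^ n"
  define d where "d = (\<lambda>e::nat set. Max e - Min e)"
  have gl: "g v < n" if "v \<in> V" for v using gimg that by auto
  have EHform: "\<exists>i j. i < j \<and> j < n \<and> e = {3^i, 3^j}" if eEH: "e \<in> EH" for e
  proof -
    obtain e0 where e0: "e0 \<in> E" "e = f ` e0" using eEH unfolding EH_def by auto
    obtain x y where xy: "e0 = {x, y}" "x \<noteq> y" using EV e0(1) by (auto simp: card_2_iff)
    have xyV: "x \<in> V" "y \<in> V" using EV e0(1) xy by auto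
    have gne: "g x \<noteq> g y" using ginj xyV xy(2) by (auto simp: inj_on_def)
    have ee: "e = {3 ^ g x, 3 ^ g y}" using e0(2) xy(1) by (simp add: f_def)
    show ?thesis
    proof (cases "g x < g y")
      case True then show ?thesis using ee gl[OF xyV(2)] by blast
    next
      case False then have "g y < g x" using gne by linarith
      then show ?thesis using ee gl[OF xyV(1)] by (metis insert_commute)
    qed
  qed
  have dform: "d {3^i, 3^j} = (3::nat)^j - 3^i" if "i < j" for i j :: nat
  proof -
    have "(3::nat)^i < 3^j" using that by simp
    then show ?thesis unfolding d_def by (simp add: max_def min_def)
  qed
  have edges: "\<forall>e\<in>EH. e \<subseteq> S \<and> card e = 2"
  proof
    fix e assume "e \<in> EH"
    then obtain e0 where e0: "e0 \<in> E" "e = f ` e0" using EH_def by auto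
    have "e \<subseteq> S" using e0 EV S_def by auto
    moreover have "card e = 2"
      using e0 EV card_image[of f e0] inj_on_subset[OF finj] by auto
    ultimately show "e \<subseteq> S \<and> card e = 2" by simp
  qed
  have SM: "S \<subseteq> {1..M}"
  proof
    fix s assume "s \<in> S"
    then obtain v where v: "v \<in> V" "s = 3 ^ g v" using S_def f_def by auto
    have "(3::nat) ^ g v \<le> 3 ^ n" using gl[OF v(1)] by (intro power_increasing) auto
    then show "s \<in> {1..M}" using v M_def by simp
  qed
  have inj: "inj_on d EH"
  proof (rule inj_onI)
    fix e1 e2 assume e1: "e1 \<in> EH" and e2: "e2 \<in> EH" and eq: "d e1 = d e2"
    obtain i1 j1 where a: "i1 < j1" "e1 = {3^i1, 3^j1}" using EHform[OF e1] by blast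
    obtain i2 j2 where b: "i2 < j2" "e2 = {3^i2, 3^j2}" using EHform[OF e2] by blast
    have q: "(3::nat)^j1 - 3^i1 = 3^j2 - 3^i2" using eq a b dform by simp
    have "j1 = j2" using band_le[OF a(1)] band_le[OF b(1)] q band_unique by metis
    have q2: "(3::nat)^j2 - 3^i1 = 3^j2 - 3^i2" using q \<open>j1 = j2\<close> by simp
    have "(3::nat)^i1 < 3^j2" "(3::nat)^i2 < 3^j2" using a b \<open>j1 = j2\<close> by simp_all
    then have "(3::nat)^i1 = 3^i2" using q2 by linarith
    then have "i1 = i2" by simp
    then show "e1 = e2" using a b \<open>j1 = j2\<close> by simp
  qed
  have DM: "d ` EH \<subseteq> {1..M} - S"
  proof
    fix x assume "x \<in> d ` EH"
    then obtain e where e: "e \<in> EH" "x = d e" by auto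
    obtain i j where a: "i < j" "j < n" "e = {3^i, 3^j}" using EHform[OF e(1)] by blast
    have x: "x = 3^j - 3^i" using e a dform by simp
    have h: "(3::nat) ^ j \<le> 3 ^ n" using a by (intro power_increasing) auto
    have "x \<le> M" using h x M_def by linarith
    moreover have "1 \<le> x" using band_le[OF a(1)] x by simp
    ultimately have "x \<in> {1..M}" by simp
    moreover have "x \<notin> S"
    proof
      assume "x \<in> S"
      then obtain v where "x = 3 ^ g v" using S_def f_def by auto
      moreover have "3^(j-1) < x \<and> x < 3^j" using band_le[OF a(1)] x by linarith
      ultimately show False using band_notpow[of j "g v"] by metis
    qed
    ultimately show "x \<in> {1..M} - S" by simp
  qed
  have inj': "inj_on (\<lambda>e. Max e - Min e) EH" using inj unfolding d_def .
  have DM': "(\<lambda>e. Max e - Min e) ` EH \<subseteq> {1..M} - S" using DM unfolding d_def .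
  have G: "simple_graph ({1..M} - d ` EH) EH \<and> supergraceful ({1..M} - d ` EH) EH"
    using generic[OF edges SM inj' DM'] unfolding d_def .
  have "f ` V \<subseteq> {1..M} - d ` EH" using SM DM unfolding S_def by blast
  moreover have "\<forall>e\<in>E. f ` e \<in> EH" unfolding EH_def by blast
  ultimately have "contains_copy ({1..M} - d ` EH) EH V E"
    unfolding contains_copy_def using finj by blast
  then show ?thesis using G by blast
qed

end
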